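(* Let $\mathcal{X}^{+}$ be any Artin spherical monoid with its classical generators $x_1,\dots,x_n$ (one generator per vertex of the Coxeter graph), and let $a_k$ denote the number of elements of $\mathcal{X}^{+}$ of length $k$. Then the sequence $(a_k)_{k\ge 1}$ has growth rate less than $4$, i.e. $\limsup_{k\to\infty} a_k^{1/k}<4$.
   Context: A Coxeter graph on vertices $x_1,\dots,x_n$ assigns to each pair $i\neq j$ a label $r_{ij}\in\{2,3,4,\dots\}\cup\{\infty\}$ (no edge means $r_{ij}=2$, an unlabeled edge means $r_{ij}=3$). The associated Artin monoid is $\langle x_1,\dots,x_n \mid x_ix_jx_ix_j\cdots = x_jx_ix_jx_i\cdots\ (\text{both sides of length } r_{ij}),\ r_{ij}<\infty\rangle$; since the relations are homogeneous, every element has a well-defined length. An Artin spherical monoid is the Artin monoid of a finite Coxeter graph each of whose connected components is one of: $A_n$ ($n\ge1$, a path $x_1-\cdots-x_n$ with all labels $3$); $B_n$ ($n\ge2$, the same path with the last edge $x_{n-1}x_n$ labeled $4$); $D_n$ ($n\ge4$, a path $x_1-\cdots-x_{n-2}$ with $x_{n-1}$ and $x_n$ both joined to $x_{n-2}$, all labels $3$); $E_n$ ($n=6,7,8$, a path $x_1-x_2-x_3-x_5-x_6-\cdots-x_n$ with $x_4$ joined to $x_3$, all labels $3$); $F_4$ (path $x_1-x_2-x_3-x_4$ with $x_2x_3$ labeled $4$, other labels $3$); $G_2$ (one edge labeled $6$); $H_3$, $H_4$ (paths on $3$, resp. $4$ vertices with the edge $x_1x_2$ labeled $5$ and other labels $3$);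 $I_2(p)$ ($p\ge5$, $p\ne6$, one edge labeled $p$). A sequence $(s_k)$ of positive numbers has growth rate less than $\gamma$ if $\limsup_k \exp(\log(s_k)/k)<\gamma$. *)

theory Defs
  imports Complex_Main "HOL-Library.Extended_Nat" "HOL-Library.Extended_Real"
begin

text \<open>A Coxeter graph on vertices 0,...,n-1 (standing for x_1,...,x_n) is a symmetric
  labelling M i j of pairs of distinct vertices by labels in {2,3,...} union {infinity};
  infinity is the extended natural number \<infinity>.\<close>

definition coxeter_graph :: "nat \<Rightarrow> (nat \<Rightarrow> nat \<Rightarrow> enat) \<Rightarrow> bool" where
  "coxeter_graph n M \<longleftrightarrow>
     (\<forall>i<n. \<forall>j<n. i \<noteq> j \<longrightarrow> M i j = M j i \<and> M i j \<ge> 2)"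

definition cox_adj :: "nat \<Rightarrow> (nat \<Rightarrow> nat \<Rightarrow> enat) \<Rightarrow> nat \<Rightarrow> nat \<Rightarrow> bool" where
  "cox_adj n M i j \<longleftrightarrow> i < n \<and> j < n \<and> i \<noteq> j \<and> M i j \<noteq> 2"

definition cox_component :: "nat \<Rightarrow> (nat \<Rightarrow> nat \<Rightarrow> enat) \<Rightarrow> nat \<Rightarrow> nat set" where
  "cox_component n M i = {j. (cox_adj n M)\<^sup>*\<^sup>* i j}"

text \<open>Standard labelled graphs on vertices 0,...,k-1 (vertex a stands for x_(a+1)).\<close>
definition typeA :: "nat \<Rightarrow> nat \<Rightarrow> enat" where
  "typeA a b = (if a + 1 = b \<or> b + 1 = a then 3 else 2)"

definition typeB :: "nat \<Rightarrow> nat \<Rightarrow> nat \<Rightarrow> enat" where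
  "typeB k a b = (if {a, b} = {k - 2, k - 1} then 4 else typeA a b)"

definition typeD :: "nat \<Rightarrow> nat \<Rightarrow> nat \<Rightarrow> enat" where
  "typeD k a b = (if {a, b} = {k - 3, k - 1} then 3
                  else if {a, b} = {k - 2, k - 1} then 2 else typeA a b)"

definition typeE :: "nat \<Rightarrow> nat \<Rightarrow> enat" where
  "typeE a b = (if {a, b} = {2, 4} then 3 else if {a, b} = {3, 4} then 2 else typeA a b)"

definition typeF :: "nat \<Rightarrow> nat \<Rightarrow> enat" where
  "typeF a b = (if {a, b} = {1, 2} then 4 else typeA a b)"

definition typeH :: "nat \<Rightarrow> nat \<Rightarrow> enat" where
  "typeH a b = (if {a, b} = {0, 1} then 5 else typeA a b)"

definition typeI :: "nat \<Rightarrow> nat \<Rightarrow> nat \<Rightarrow> enat" where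
  "typeI p a b = (if {a, b} = {0, 1} then enat p else 2)"

definition spherical_type :: "nat \<Rightarrow> (nat \<Rightarrow> nat \<Rightarrow> enat) \<Rightarrow> bool" where
  "spherical_type k T \<longleftrightarrow>
       (k \<ge> 1 \<and> T = typeA)
     \<or> (k \<ge> 2 \<and> T = typeB k)
     \<or> (k \<ge> 4 \<and> T = typeD k)
     \<or> (k \<in> {6, 7, 8} \<and> T = typeE)
     \<or> (k = 4 \<and> T = typeF)
     \<or> (k = 2 \<and> T = typeI 6)
     \<or> (k \<in> {3, 4} \<and> T = typeH)
     \<or> (k = 2 \<and> (\<exists>p\<ge>5. p \<noteq> 6 \<and> T = typeI p))"

definition artin_spherical :: "nat \<Rightarrow> (nat \<Rightarrow> nat \<Rightarrow> enat) \<Rightarrow> bool" where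
  "artin_spherical n M \<longleftrightarrow>
     (\<forall>i<n. \<exists>k g T. bij_betw g {0..<k} (cox_component n M i) \<and> spherical_type k T \<and>
        (\<forall>a<k. \<forall>b<k. a \<noteq> b \<longrightarrow> M (g a) (g b) = T a b))"

fun alt_word :: "nat \<Rightarrow> nat \<Rightarrow> nat \<Rightarrow> nat list" where
  "alt_word i j 0 = []"
| "alt_word i j (Suc r) = i # alt_word j i r"

inductive braid_step :: "nat \<Rightarrow> (nat \<Rightarrow> nat \<Rightarrow> enat) \<Rightarrow> nat list \<Rightarrow> nat list \<Rightarrow> bool"
  for n M where
  "\<lbrakk>i < n; j < n; i \<noteq> j; M i j = enat r\<rbrakk> \<Longrightarrow>
     braid_step n M (u @ alt_word i j r @ v) (u @ alt_word j i r @ v)"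

text \<open>The Artin monoid is the set of words over {0..<n} modulo the congruence
  generated by the braid relations.\<close>
definition artin_equiv :: "nat \<Rightarrow> (nat \<Rightarrow> nat \<Rightarrow> enat) \<Rightarrow> (nat list \<times> nat list) set" where
  "artin_equiv n M = {(u, v). equivclp (braid_step n M) u v}"

definition artin_count :: "nat \<Rightarrow> (nat \<Rightarrow> nat \<Rightarrow> enat) \<Rightarrow> nat \<Rightarrow> nat" where
  "artin_count n M k =
     card ({w. set w \<subseteq> {..<n} \<and> length w = k} // artin_equiv n M)"

end

theory Submission
  imports Defs
begin


fun good :: "(nat \<Rightarrow> nat \<Rightarrow> bool) \<Rightarrow> nat list \<Rightarrow> bool" where
  "good P [] = True"
| "good P [x] = True"
| "good P (x#y#w) = (P x y \<and> good P (y#w))"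

fun mu :: "(nat \<Rightarrow> nat) \<Rightarrow> nat list \<Rightarrow> nat" where
  "mu rk [] = 0"
| "mu rk (x#w) = rk x * 2^length w + mu rk w"

lemma mu_append: "mu rk (u @ v) = mu rk u * 2^length v + mu rk v"
  by (induction u) (auto simp: algebra_simps power_add)

lemma not_good_split: "\<not> good P w \<Longrightarrow> \<exists>u x y v. w = u @ x # y # v \<and> \<not> P x y"
proof (induction P w rule: good.induct)
  case (3 P x y w)
  show ?case
  proof (cases "P x y")
    case True
    with 3 obtain u a b v where "y # w = u @ a # b # v" "\<not> P a b" by auto
    then show ?thesis by (intro exI[of _ "x#u"]) auto
  next
    case False
    then show ?thesis by (intro exI[of _ "[]"]) auto
  qed
qed auto

definition okp :: "(nat \<Rightarrow> nat) \<Rightarrow> (nat \<Rightarrow> nat \<Rightarrow> enat) \<Rightarrow> nat \<Rightarrow> nat \<Rightarrow> bool" where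
  "okp rk M x y \<longleftrightarrow> rk x \<le> rk y \<or> M x y \<noteq> 2"

lemma good_rep:
  assumes "set w \<subseteq> {..<n}"
  shows "\<exists>w'. equivclp (braid_step n M) w w' \<and> set w' \<subseteq> {..<n} \<and> length w' = length w
              \<and> good (okp rk M) w'"
proof -
  let ?S = "\<lambda>w'. equivclp (braid_step n M) w w' \<and> set w' \<subseteq> {..<n} \<and> length w' = length w"
  have "?S w" using assms by auto
  from ex_has_least_nat[of ?S w "mu rk", OF this]
  obtain w0 where w0: "?S w0" and min: "\<And>y. ?S y \<Longrightarrow> mu rk w0 \<le> mu rk y" by blast
  have "good (okp rk M) w0"
  proof (rule ccontr)
    assume "\<not> good (okp rk M) w0"
    from not_good_split[OF this] obtain u x y v where
      e: "w0 = u @ x # y # v" and bad: "\<not> okp rk M x y" by blast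
    from bad have lt: "rk y < rk x" and M2: "M x y = enat 2"
      by (auto simp: okp_def numeral_eq_enat)
    have xy: "x \<noteq> y" using lt by auto
    have xn: "x < n" "y < n" using w0 e by auto
    have "braid_step n M (u @ alt_word x y 2 @ v) (u @ alt_word y x 2 @ v)"
      using braid_step.intros[of x n y M 2 u v] xn xy M2 by blast
    then have st: "braid_step n M w0 (u @ y # x # v)"
      using e by (simp add: numeral_2_eq_2)
    have "?S (u @ y # x # v)"
      using w0 e st by (auto intro: equivclp_into_equivclp)
    moreover have "mu rk (u @ y # x # v) < mu rk w0"
      using lt by (simp add: e mu_append)
    ultimately show False using min by fastforce
  qed
  then show ?thesis using w0 by blast
qed



definition Hs :: "nat \<Rightarrow> (nat \<Rightarrow> nat \<Rightarrow> bool) \<Rightarrow> nat \<Rightarrow> nat \<Rightarrow> nat list set" where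
  "Hs n P k a = {w. set w \<subseteq> {..<n} \<and> length w = Suc k \<and> good P w \<and> hd w = a}"

lemma finite_Hs: "finite (Hs n P k a)"
proof -
  have "Hs n P k a \<subseteq> {w. set w \<subseteq> {..<n} \<and> length w = Suc k}" by (auto simp: Hs_def)
  moreover have "finite {w. set w \<subseteq> {..<n} \<and> length w = Suc k}"
    by (rule finite_lists_length_eq) simp
  ultimately show ?thesis by (rule finite_subset)
qed

lemma Hs_Suc: "a < n \<Longrightarrow> Hs n P (Suc k) a = (Cons a) ` (\<Union>b\<in>{b. b<n \<and> P a b}. Hs n P k b)"
proof (intro equalityI subsetI)
  fix w assume a: "a < n" and w: "w \<in> Hs n P (Suc k) a"
  then obtain w' where e: "w = a # w'" and l: "length w' = Suc k"
    by (cases w) (auto simp: Hs_def)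
  then obtain b w'' where e': "w' = b # w''" by (cases w') auto
  from w e e' l show "w \<in> (Cons a) ` (\<Union>b\<in>{b. b<n \<and> P a b}. Hs n P k b)"
    by (auto simp: Hs_def)
next
  fix w assume a: "a < n" and w: "w \<in> (Cons a) ` (\<Union>b\<in>{b. b<n \<and> P a b}. Hs n P k b)"
  then obtain b w' where e: "w = a # w'" and b: "b < n" "P a b" and w': "w' \<in> Hs n P k b" by auto
  then obtain w'' where e': "w' = b # w''" by (cases w') (auto simp: Hs_def)
  from a w' b e e' show "w \<in> Hs n P (Suc k) a" by (auto simp: Hs_def)
qed

lemma card_Hs_bound:
  assumes pos: "0 < lo" and W: "\<And>v. v < n \<Longrightarrow> lo \<le> W v"
    and S: "\<And>v. v < n \<Longrightarrow> (\<Sum>b\<in>{b. b<n \<and> P v b}. W b) \<le> c * W v"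
  shows "a < n \<Longrightarrow> real (card (Hs n P k a)) \<le> c^k * W a / lo"
proof (induction k arbitrary: a)
  case 0
  have "Hs n P 0 a = {[a]}"
  proof (intro equalityI subsetI)
    fix w assume "w \<in> Hs n P 0 a" then show "w \<in> {[a]}"
      by (cases w) (auto simp: Hs_def)
  qed (use 0 in \<open>auto simp: Hs_def\<close>)
  then show ?case using W[OF 0] pos by simp
next
  case (Suc k)
  have disj: "\<forall>i\<in>{b. b<n \<and> P a b}. \<forall>j\<in>{b. b<n \<and> P a b}. i \<noteq> j \<longrightarrow> Hs n P k i \<inter> Hs n P k j = {}"
    by (auto simp: Hs_def)
  have "card (Hs n P (Suc k) a) = card (\<Union>b\<in>{b. b<n \<and> P a b}. Hs n P k b)"
    unfolding Hs_Suc[OF Suc.prems] by (rule card_image) simp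
  also have "\<dots> = (\<Sum>b\<in>{b. b<n \<and> P a b}. card (Hs n P k b))"
    by (rule card_UN_disjoint) (use disj finite_Hs in auto)
  finally have "real (card (Hs n P (Suc k) a)) = (\<Sum>b\<in>{b. b<n \<and> P a b}. real (card (Hs n P k b)))"
    by simp
  also have "\<dots> \<le> (\<Sum>b\<in>{b. b<n \<and> P a b}. c^k * W b / lo)"
    by (rule sum_mono) (use Suc.IH in auto)
  also have "\<dots> = c^k / lo * (\<Sum>b\<in>{b. b<n \<and> P a b}. W b)"
    by (simp add: sum_distrib_left)
  also have "\<dots> \<le> c^k / lo * (c * W a)"
  proof (rule mult_left_mono)
    show "0 \<le> c^k / lo"
    proof -
      have "0 \<le> W a" using W[OF Suc.prems] pos by simp
      have "0 < lo" by fact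
      have "0 \<le> c"
      proof (rule ccontr)
        assume "\<not> 0 \<le> c"
        then have "c * W a < 0" using W[OF Suc.prems] pos by (simp add: mult_neg_pos)
        moreover have "0 \<le> (\<Sum>b\<in>{b. b<n \<and> P a b}. W b)"
          by (rule sum_nonneg) (use W pos in force)
        ultimately show False using S[OF Suc.prems] by linarith
      qed
      then show ?thesis using pos by simp
    qed
  qed (rule S[OF Suc.prems])
  also have "\<dots> = c^Suc k * W a / lo" by simp
  finally show ?case .
qed

lemma card_good_bound:
  assumes pos: "0 < lo" and W: "\<And>v. v < n \<Longrightarrow> lo \<le> W v \<and> W v \<le> hi"
    and S: "\<And>v. v < n \<Longrightarrow> (\<Sum>b\<in>{b. b<n \<and> P v b}. W b) \<le> c * W v"
    and c: "0 \<le> c"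
  shows "real (card {w. set w \<subseteq> {..<n::nat} \<and> length w = Suc k \<and> good P w}) \<le> real n * (c^k * hi / lo)"
proof -
  have e: "{w. set w \<subseteq> {..<n} \<and> length w = Suc k \<and> good P w} = (\<Union>a\<in>{..<n}. Hs n P k a)"
  proof (intro equalityI subsetI)
    fix w assume w: "w \<in> {w. set w \<subseteq> {..<n} \<and> length w = Suc k \<and> good P w}"
    then obtain a w' where "w = a # w'" by (cases w) auto
    with w show "w \<in> (\<Union>a\<in>{..<n}. Hs n P k a)" by (auto simp: Hs_def)
  qed (auto simp: Hs_def)
  have "card (\<Union>a\<in>{..<n}. Hs n P k a) \<le> (\<Sum>a\<in>{..<n}. card (Hs n P k a))"
    by (rule card_UN_le) simp
  then have "real (card (\<Union>a\<in>{..<n}. Hs n P k a)) \<le> (\<Sum>a\<in>{..<n}. real (card (Hs n P k a)))"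
    by (metis of_nat_le_iff of_nat_sum)
  also have "\<dots> \<le> (\<Sum>a\<in>{..<n}. c^k * hi / lo)"
  proof (rule sum_mono)
    fix a assume a: "a \<in> {..<n}"
    have "real (card (Hs n P k a)) \<le> c^k * W a / lo"
      using card_Hs_bound[of lo n W P c, OF pos] W S a by auto
    also have "\<dots> \<le> c^k * hi / lo"
      using W[of a] a pos c by (auto intro!: divide_right_mono mult_left_mono)
    finally show "real (card (Hs n P k a)) \<le> c^k * hi / lo" .
  qed
  also have "\<dots> = real n * (c^k * hi / lo)" by simp
  finally show ?thesis using e by simp
qed



lemma equivclp_Image_eq:
  assumes "equivclp r x y"
  shows "{(u, v). equivclp r u v} `` {x} = {(u, v). equivclp r u v} `` {y}"
  using assms by (auto intro: equivclp_trans equivclp_sym)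

lemma count_le:
  "artin_count n M k \<le> card {w. set w \<subseteq> {..<n} \<and> length w = k \<and> good (okp rk M) w}"
proof -
  let ?A = "{w. set w \<subseteq> {..<n} \<and> length w = k}"
  let ?G = "{w. set w \<subseteq> {..<n} \<and> length w = k \<and> good (okp rk M) w}"
  have finG: "finite ?G"
    by (rule finite_subset[OF _ finite_lists_length_eq[of "{..<n}" k]]) auto
  have sub: "?A // artin_equiv n M \<subseteq> (\<lambda>w. artin_equiv n M `` {w}) ` ?G"
  proof
    fix X assume "X \<in> ?A // artin_equiv n M"
    then obtain x where x: "x \<in> ?A" and X: "X = artin_equiv n M `` {x}"
      by (auto simp: quotient_def)
    from good_rep[of x n M rk] x obtain w' where
      w': "equivclp (braid_step n M) x w'" "set w' \<subseteq> {..<n}" "length w' = length x"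
          "good (okp rk M) w'" by auto
    have "X = artin_equiv n M `` {w'}"
      unfolding X artin_equiv_def by (rule equivclp_Image_eq[OF w'(1)])
    moreover have "w' \<in> ?G" using w' x by auto
    ultimately show "X \<in> (\<lambda>w. artin_equiv n M `` {w}) ` ?G" by blast
  qed
  have "artin_count n M k \<le> card ((\<lambda>w. artin_equiv n M `` {w}) ` ?G)"
    unfolding artin_count_def by (rule card_mono[OF finite_imageI[OF finG] sub])
  also have "\<dots> \<le> card ?G" by (rule card_image_le[OF finG])
  finally show ?thesis .
qed

lemma final_from_weights:
  fixes lo hi c :: real
  assumes lo: "0 < lo" and W: "\<And>v. v < n \<Longrightarrow> lo \<le> W v \<and> W v \<le> hi"
    and S: "\<And>v. v < n \<Longrightarrow> (\<Sum>b\<in>{b. b<n \<and> okp rk M v b}. W b) \<le> c * W v"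
    and c: "0 < c" "c < 4"
  shows "limsup (\<lambda>k. ereal (root k (real (artin_count n M k)))) < (4::ereal)"
proof -
  define K where "K = real n * hi / (lo * c) + 1"
  have hi: "0 \<le> hi" if "n > 0" using W[of 0] lo that by auto
  have K0: "0 < K"
  proof (cases "n = 0")
    case False then have "0 \<le> real n * hi / (lo * c)" using hi lo c by auto
    then show ?thesis by (simp add: K_def)
  qed (simp add: K_def)
  have bound: "real (artin_count n M k) \<le> K * c^k" if k: "k > 0" for k
  proof -
    obtain j where kj: "k = Suc j" using k by (cases k) auto
    have "real (artin_count n M k) \<le> real (card {w. set w \<subseteq> {..<n} \<and> length w = Suc j \<and> good (okp rk M) w})"
      using count_le[of n M k rk] kj by simp
    also have "\<dots> \<le> real n * (c^j * hi / lo)"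
      by (rule card_good_bound[OF lo W S]) (use c in auto)
    also have "\<dots> = (real n * hi / (lo * c)) * c^k"
      using c lo by (simp add: kj field_simps)
    also have "\<dots> \<le> K * c^k" using c by (simp add: K_def distrib_right)
    finally show ?thesis .
  qed
  define d where "d = (c + 4) / 2"
  have "(\<lambda>k. root k K) \<longlonglongrightarrow> 1" by (rule LIMSEQ_root_const[OF K0])
  moreover have "1 < d / c" using c by (simp add: d_def field_simps)
  ultimately have ev: "eventually (\<lambda>k. root k K < d / c) sequentially"
    by (rule order_tendstoD)
  have "eventually (\<lambda>k. ereal (root k (real (artin_count n M k))) \<le> ereal d) sequentially"
    using ev eventually_gt_at_top[of 0]
  proof eventually_elim
    case (elim k)
    have "root k (real (artin_count n M k)) \<le> root k (K * c^k)"
      using bound[OF elim(2)] elim(2) by (simp add: real_root_le_iff)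
    also have "\<dots> = root k K * c"
      using elim(2) c by (simp add: real_root_mult real_root_pow_pos2 real_root_power_cancel)
    also have "\<dots> \<le> d / c * c" using elim(1) c by (intro mult_right_mono) auto
    also have "\<dots> = d" using c by simp
    finally show ?case by simp
  qed
  then have "limsup (\<lambda>k. ereal (root k (real (artin_count n M k)))) \<le> ereal d"
    by (rule Limsup_bounded)
  also have "ereal d < 4" using c by (simp add: d_def)
  finally show ?thesis .
qed



lemma geo_sum:
  fixes N :: real
  shows "(\<Sum>a\<in>{x..<x+j}. (N - real a) / 2^a) = 2*(N - real x - 1)/2^x - 2*(N - real x - real j - 1)/2^(x+j)"
proof (induction j)
  case 0 then show ?case by simp
next
  case (Suc j)
  have "(\<Sum>a\<in>{x..<x+Suc j}. (N - real a) / 2^a) = (\<Sum>a\<in>{x..<x+j}. (N - real a) / 2^a) + (N - real (x+j)) / 2^(x+j)"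
    by simp
  also have "\<dots> = 2*(N - real x - 1)/2^x - 2*(N - real x - real j - 1)/2^(x+j) + (N - real (x+j)) / 2^(x+j)"
    using Suc by simp
  also have "\<dots> = 2*(N - real x - 1)/2^x - 2*(N - real x - real (Suc j) - 1)/2^(x+Suc j)"
    by (simp add: field_simps)
  finally show ?case .
qed

definition wsum :: "nat \<Rightarrow> (nat \<Rightarrow> nat \<Rightarrow> enat) \<Rightarrow> (nat \<Rightarrow> real) \<Rightarrow> nat \<Rightarrow> real" where
  "wsum k T w x = (\<Sum>a\<in>{a. a<k \<and> (x \<le> a \<or> T x a \<noteq> 2)}. w a)"

lemma path_weights:
  assumes adj: "\<And>x a. x < k \<Longrightarrow> a < x \<Longrightarrow> (T x a \<noteq> 2 \<longleftrightarrow> Suc a = x)"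
  shows "\<exists>w. (\<forall>a<k. 0 < w a) \<and> (\<forall>x<k. wsum k T w x < 4 * w x)"
proof (intro exI conjI allI impI)
  define N where "N = real k + 2"
  let ?w = "\<lambda>a::nat. (N - real a) / 2^a"
  show "0 < ?w a" if "a < k" for a using that by (simp add: N_def)
  fix x assume x: "x < k"
  have tot: "(\<Sum>a\<in>{x..<k}. ?w a) = 2*(N - real x - 1)/2^x - 2/2^k"
    using geo_sum[of N x "k - x"] x by (simp add: N_def)
  show "wsum k T ?w x < 4 * ?w x"
  proof (cases x)
    case 0
    have "{a. a<k \<and> (x \<le> a \<or> T x a \<noteq> 2)} = {x..<k}" using 0 by auto
    then have "wsum k T ?w x = 2*(N - real x - 1)/2^x - 2/2^k" using tot by (simp add: wsum_def)
    moreover have "0 < 2/(2::real)^k" by simp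
    ultimately show ?thesis using 0 unfolding N_def by simp (smt (verit) of_nat_0_le_iff divide_pos_pos zero_less_power)
  next
    case (Suc y)
    have "{a. a<k \<and> (x \<le> a \<or> T x a \<noteq> 2)} = insert y {x..<k}"
      using adj[OF x] x Suc by (auto simp: not_le)
    then have "wsum k T ?w x = ?w y + (\<Sum>a\<in>{x..<k}. ?w a)"
      unfolding wsum_def using Suc by simp
    also have "\<dots> = ?w y + 2*(N - real x - 1)/2^x - 2/2^k" using tot by simp
    also have "\<dots> < ?w y + 2*(N - real x - 1)/2^x" by simp
    also have "\<dots> = 4 * ?w x" using Suc by (simp add: field_simps)
    finally show ?thesis .
  qed
qed



lemma typeD_adj:
  assumes "4 \<le> k" "a < x" "x < k"
  shows "typeD k x a \<noteq> 2 \<longleftrightarrow> (x = k-1 \<and> a = k-3) \<or> (x \<noteq> k-1 \<and> Suc a = x)"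
  using assms by (auto simp: typeD_def typeA_def doubleton_eq_iff numeral_eq_enat)

lemma D_weights:
  assumes k: "4 \<le> k"
  shows "\<exists>w. (\<forall>a<k. 0 < w a) \<and> (\<forall>x<k. wsum k (typeD k) w x < 4 * w x)"
proof (intro exI conjI allI impI)
  define N where "N = real k + 7"
  let ?v = "\<lambda>a::nat. (N - real a) / 2^a"
  let ?w = "\<lambda>a::nat. if a = k - 1 then 27 / 2^k else ?v a"
  show "0 < ?w a" if "a < k" for a using that by (simp add: N_def)
  fix x assume x: "x < k"
  show "wsum k (typeD k) ?w x < 4 * ?w x"
  proof (cases "x = k - 1")
    case True
    have lt: "k-3 < x" using True k by simp
    have k3: "typeD k x (k-3) \<noteq> 2"
      using typeD_adj[OF k lt x] True by blast
    have "{a. a<k \<and> (x \<le> a \<or> typeD k x a \<noteq> 2)} = {k-1, k-3}"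
    proof (intro equalityI subsetI)
      fix a assume "a \<in> {a. a<k \<and> (x \<le> a \<or> typeD k x a \<noteq> 2)}"
      then have a: "a < k" "x \<le> a \<or> typeD k x a \<noteq> 2" by auto
      show "a \<in> {k-1, k-3}"
      proof (cases "x \<le> a")
        case True then show ?thesis using a \<open>x = k - 1\<close> by auto
      next
        case False
        then have "a < x" by simp
        from typeD_adj[OF k this x] a False \<open>x = k - 1\<close> show ?thesis by auto
      qed
    next
      fix a assume "a \<in> {k-1, k-3}"
      then show "a \<in> {a. a<k \<and> (x \<le> a \<or> typeD k x a \<noteq> 2)}"
        using k3 x True k by auto
    qed
    moreover have ne: "k - 3 \<noteq> k - 1" using k by simp
    ultimately have "wsum k (typeD k) ?w x = 27 / 2^k + ?v (k-3)"
      unfolding wsum_def by simp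
    also have "?v (k-3) = 80 / 2^k"
    proof -
      have "k = (k-3) + 3" using k by simp
      then have "(2::real)^k = 2^(k-3) * 2^3" by (metis power_add)
      then have "(2::real)^k = 2^(k-3) * 8" by simp
      moreover have "N - real (k-3) = 10" using k by (simp add: N_def of_nat_diff)
      ultimately show ?thesis by (simp add: field_simps)
    qed
    finally show ?thesis using True by (simp add: field_simps)
  next
    case False
    then have xk: "x \<le> k - 2" using x by auto
    have tot: "(\<Sum>a\<in>{x..<k-1}. ?v a) = 2*(N - real x - 1)/2^x - 28/2^k"
    proof -
      have e: "x + (k - 1 - x) = k - 1" using xk k by simp
      have "(\<Sum>a\<in>{x..<k-1}. ?v a) = 2*(N - real x - 1)/2^x - 2*(N - real x - real (k-1-x) - 1)/2^(k-1)"
        using geo_sum[of N x "k - 1 - x"] by (simp only: e)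
      also have "2*(N - real x - real (k-1-x) - 1)/2^(k-1) = 28/2^k"
      proof -
        have "N - real x - real (k-1-x) - 1 = 7" using xk k by (simp add: N_def of_nat_diff)
        moreover have "k = Suc (k-1)" using k by simp
        then have "(2::real)^k = 2^(k-1)*2" by (metis power_Suc2)
        ultimately show ?thesis by (simp add: field_simps)
      qed
      finally show ?thesis .
    qed
    have tot': "(\<Sum>a\<in>{x..<k-1}. ?w a) = 2*(N - real x - 1)/2^x - 28/2^k"
      using tot by (intro trans[OF sum.cong tot]) auto
    have ins: "{x..<k} = insert (k-1) {x..<k-1}" using xk k by auto
    have hi: "(\<Sum>a\<in>{x..<k}. ?w a) = 2*(N - real x - 1)/2^x - 1/2^k"
      unfolding ins using tot' by simp
    show ?thesis
    proof (cases x)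
      case 0
      have "{a. a<k \<and> (x \<le> a \<or> typeD k x a \<noteq> 2)} = {x..<k}" using 0 by auto
      then have "wsum k (typeD k) ?w x = 2*(N - real x - 1)/2^x - 1/2^k" using hi by (simp add: wsum_def)
      moreover have "0 < 1/(2::real)^k" by simp
      ultimately show ?thesis using 0 False unfolding N_def by simp (smt (verit) of_nat_0_le_iff divide_pos_pos zero_less_power)
    next
      case (Suc y)
      have "{a. a<k \<and> (x \<le> a \<or> typeD k x a \<noteq> 2)} = insert y {x..<k}"
        using typeD_adj[OF k, of _ x] x Suc False by (auto simp: not_le)
      then have "wsum k (typeD k) ?w x = ?w y + (\<Sum>a\<in>{x..<k}. ?w a)"
        unfolding wsum_def using Suc by simp
      also have "\<dots> = ?v y + 2*(N - real x - 1)/2^x - 1/2^k" proof -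
        have "y \<noteq> k - 1" using Suc x by simp
        then show ?thesis using hi by simp
      qed
      also have "\<dots> < ?v y + 2*(N - real x - 1)/2^x" by simp
      also have "\<dots> = 4 * ?w x" using Suc False by (simp add: field_simps)
      finally show ?thesis .
    qed
  qed
qed



lemma wsum_if: "wsum k T w x = (\<Sum>a<k. if x \<le> a \<or> T x a \<noteq> 2 then w a else 0)"
proof -
  have "{a. a<k \<and> (x \<le> a \<or> T x a \<noteq> 2)} = {..<k} \<inter> {a. x \<le> a \<or> T x a \<noteq> 2}" by auto
  then show ?thesis unfolding wsum_def using sum.inter_restrict[of "{..<k}" w] by simp
qed

definition echeck :: "nat \<Rightarrow> (nat \<Rightarrow> nat \<Rightarrow> enat) \<Rightarrow> nat list \<Rightarrow> bool" where
  "echeck k T ws \<longleftrightarrow> list_all (\<lambda>x. sum_list (map (\<lambda>a. if x \<le> a \<or> T x a \<noteq> 2 then ws!a else 0) [0..<k]) < 4 * ws!x) [0..<k]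
     \<and> list_all (\<lambda>x. 0 < ws!x) [0..<k]"

lemma echeck_sound:
  assumes "echeck k T ws"
  shows "\<exists>w. (\<forall>a<k. 0 < w a) \<and> (\<forall>x<k. wsum k T w x < 4 * w x)"
proof (intro exI conjI allI impI)
  show "0 < real (ws!a)" if "a < k" for a using assms that by (auto simp: echeck_def list_all_iff)
  fix x assume x: "x < k"
  have "sum_list (map (\<lambda>a. if x \<le> a \<or> T x a \<noteq> 2 then ws!a else 0) [0..<k]) < 4 * ws!x"
    using assms x by (auto simp: echeck_def list_all_iff)
  then have "(\<Sum>a<k. if x \<le> a \<or> T x a \<noteq> 2 then ws!a else 0) < 4 * ws!x"
    by (simp add: sum_list_distinct_conv_sum_set atLeast0LessThan)
  then have "real (\<Sum>a<k. if x \<le> a \<or> T x a \<noteq> 2 then ws!a else 0) < real (4 * ws!x)"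
    by linarith
  then show "wsum k T (\<lambda>a. real (ws!a)) x < 4 * real (ws!x)"
    unfolding wsum_if by (simp add: of_nat_sum if_distrib cong: if_cong)
qed

lemma E_weights:
  assumes k: "k \<in> {6,7,8}"
  shows "\<exists>w. (\<forall>a<k. 0 < w a) \<and> (\<forall>x<k. wsum k typeE w x < 4 * w x)"
proof -
  have E6: "echeck 6 typeE [1000, 1000, 724, 447, 324, 124]" by code_simp
  have E7: "echeck 7 typeE [1000, 1000, 732, 464, 340, 144, 53]" by code_simp
  have E8: "echeck 8 typeE [1000, 1000, 737, 474, 349, 155, 64, 23]" by code_simp
  from k E6 E7 E8 echeck_sound show ?thesis by auto
qed



lemma type_weights0:
  assumes "spherical_type k T"
  shows "\<exists>w. (\<forall>a<k. 0 < w a) \<and> (\<forall>x<k. wsum k T w x < 4 * w x)"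
  using assms unfolding spherical_type_def
proof (elim disjE conjE exE)
  assume "T = typeA" then show ?thesis
    by (intro path_weights) (auto simp: typeA_def numeral_eq_enat)
next
  assume "T = typeB k" then show ?thesis
    by (intro path_weights) (auto simp: typeB_def typeA_def numeral_eq_enat doubleton_eq_iff)
next
  assume "4 \<le> k" "T = typeD k" then show ?thesis using D_weights by simp
next
  assume "k \<in> {6,7,8}" "T = typeE" then show ?thesis using E_weights by simp
next
  assume "k = 4" "T = typeF" then show ?thesis
    by (intro path_weights) (auto simp: typeF_def typeA_def numeral_eq_enat doubleton_eq_iff)
next
  assume "k = 2" "T = typeI 6" then show ?thesis
    by (intro path_weights) (auto simp: typeI_def numeral_eq_enat doubleton_eq_iff less_Suc_eq)
next
  assume "k \<in> {3,4}" "T = typeH" then show ?thesis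
    by (intro path_weights) (auto simp: typeH_def typeA_def numeral_eq_enat doubleton_eq_iff)
next
  fix p assume "k = 2" "5 \<le> p" "p \<noteq> 6" "T = typeI p" then show ?thesis
    by (intro path_weights) (auto simp: typeI_def numeral_eq_enat doubleton_eq_iff less_Suc_eq)
qed

lemma spherical_pos: "spherical_type k T \<Longrightarrow> 0 < k"
  by (auto simp: spherical_type_def)

lemma type_weights:
  assumes "spherical_type k T"
  shows "\<exists>w. (\<forall>a<k. 0 < w a \<and> w a \<le> 1) \<and> (\<forall>x<k. wsum k T w x < 4 * w x)"
proof -
  obtain w where pos: "\<forall>a<k. 0 < w a" and S: "\<forall>x<k. wsum k T w x < 4 * w x"
    using type_weights0[OF assms] by blast
  define m where "m = Max (w ` {..<k})"
  have k: "0 < k" using spherical_pos[OF assms] .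
  have le: "w a \<le> m" if "a < k" for a using that by (auto simp: m_def)
  have m: "0 < m" using le[OF k] pos k by force
  show ?thesis
  proof (intro exI conjI allI impI)
    fix a assume a: "a < k"
    show "0 < w a / m" using pos a m by simp
    show "w a / m \<le> 1" using le[OF a] m by simp
  next
    fix x assume x: "x < k"
    have "wsum k T (\<lambda>a. w a / m) x = wsum k T w x / m"
      by (simp add: wsum_def sum_divide_distrib)
    also have "\<dots> < 4 * w x / m" using S x m by (simp add: divide_strict_right_mono)
    finally show "wsum k T (\<lambda>a. w a / m) x < 4 * (w x / m)" by simp
  qed
qed



context
  fixes n :: nat and M :: "nat \<Rightarrow> nat \<Rightarrow> enat"
  assumes cg: "coxeter_graph n M"
begin

lemma adj_sym: "cox_adj n M i j \<Longrightarrow> cox_adj n M j i"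
  using cg by (auto simp: cox_adj_def coxeter_graph_def)

lemma comp_lt: "i < n \<Longrightarrow> j \<in> cox_component n M i \<Longrightarrow> j < n"
proof -
  assume i: "i < n" and "j \<in> cox_component n M i"
  then have "(cox_adj n M)\<^sup>*\<^sup>* i j" by (simp add: cox_component_def)
  then show "j < n" using i by (induction rule: rtranclp_induct) (auto simp: cox_adj_def)
qed

lemma comp_self: "i \<in> cox_component n M i"
  by (simp add: cox_component_def)

lemma rtr_sym: "(cox_adj n M)\<^sup>*\<^sup>* i j \<Longrightarrow> (cox_adj n M)\<^sup>*\<^sup>* j i"
  by (induction rule: rtranclp_induct) (auto intro: converse_rtranclp_into_rtranclp adj_sym)

lemma comp_eq: "j \<in> cox_component n M i \<Longrightarrow> cox_component n M j = cox_component n M i"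
  unfolding cox_component_def by (auto intro: rtranclp_trans rtr_sym)

lemma comp_adj: "i < n \<Longrightarrow> j < n \<Longrightarrow> i \<noteq> j \<Longrightarrow> M i j \<noteq> 2 \<Longrightarrow> j \<in> cox_component n M i"
  unfolding cox_component_def by (auto simp: cox_adj_def)

lemma comp_finite: "i < n \<Longrightarrow> finite (cox_component n M i)"
  by (rule finite_subset[of _ "{..<n}"]) (auto dest: comp_lt)

definition rep :: "nat \<Rightarrow> nat" where "rep i = Min (cox_component n M i)"

lemma rep_in: "i < n \<Longrightarrow> rep i \<in> cox_component n M i"
  unfolding rep_def using comp_finite comp_self by (intro Min_in) auto

lemma rep_lt: "i < n \<Longrightarrow> rep i < n"
  using rep_in comp_lt by blast

lemma comp_rep: "i < n \<Longrightarrow> cox_component n M (rep i) = cox_component n M i"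
  using rep_in comp_eq by blast

lemma rep_eq: "i < n \<Longrightarrow> j \<in> cox_component n M i \<Longrightarrow> rep j = rep i"
  unfolding rep_def using comp_eq by simp

lemma rep_rep: "i < n \<Longrightarrow> rep (rep i) = rep i"
  using rep_eq rep_in by blast

lemma rep_neq: "i < n \<Longrightarrow> j < n \<Longrightarrow> j \<notin> cox_component n M i \<Longrightarrow> rep j \<noteq> rep i"
proof
  assume i: "i < n" and j: "j < n" and nj: "j \<notin> cox_component n M i" and e: "rep j = rep i"
  have "rep i \<in> cox_component n M j" using rep_in[OF j] e by simp
  then have "cox_component n M (rep i) = cox_component n M j" by (rule comp_eq)
  then have "cox_component n M i = cox_component n M j" using comp_rep[OF i] by simp
  then show False using nj comp_self by auto
qed

end



lemma local_weights:
  assumes sph: "artin_spherical n M" and c: "c < n"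
  shows "\<exists>k g w. bij_betw g {0..<k} (cox_component n M c) \<and> (\<forall>a<k. 0 < w a \<and> w a \<le> 1)
     \<and> (\<forall>x<k. wsum k (\<lambda>x a. M (g x) (g a)) w x < 4 * w x)"
proof -
  obtain k g T where bij: "bij_betw g {0..<k} (cox_component n M c)" and st: "spherical_type k T"
    and lab: "\<forall>a<k. \<forall>b<k. a \<noteq> b \<longrightarrow> M (g a) (g b) = T a b"
    using sph c unfolding artin_spherical_def by blast
  obtain w where w: "\<forall>a<k. 0 < w a \<and> w a \<le> 1" and S: "\<forall>x<k. wsum k T w x < 4 * w x"
    using type_weights[OF st] by blast
  have "wsum k (\<lambda>x a. M (g x) (g a)) w x = wsum k T w x" if x: "x < k" for x
  proof -
    have "{a. a<k \<and> (x \<le> a \<or> M (g x) (g a) \<noteq> 2)} = {a. a<k \<and> (x \<le> a \<or> T x a \<noteq> 2)}"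
      using lab x by auto
    then show ?thesis by (simp add: wsum_def)
  qed
  then show ?thesis using bij w S by (intro exI[of _ k] exI[of _ g] exI[of _ w]) auto
qed



theorem theorem1:
  fixes n :: nat and M :: "nat \<Rightarrow> nat \<Rightarrow> enat"
  assumes "coxeter_graph n M" and "artin_spherical n M"
  shows "limsup (\<lambda>k. ereal (root k (real (artin_count n M k)))) < (4::ereal)"
proof -
  note cg = assms(1) and sph = assms(2)
  let ?C = "cox_component n M"
  let ?rep = "rep n M"
  have "\<forall>c. \<exists>k g w. c < n \<longrightarrow> bij_betw g {0..<k} (?C c) \<and> (\<forall>a<k. 0 < w a \<and> w a \<le> 1)
     \<and> (\<forall>x<k. wsum k (\<lambda>x a. M (g x) (g a)) w x < 4 * w x)"
    using local_weights[OF sph] by blast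
  then obtain K G Wt where D: "\<And>c. c < n \<Longrightarrow> bij_betw (G c) {0..<K c} (?C c) \<and> (\<forall>a<K c. 0 < Wt c a \<and> Wt c a \<le> 1)
     \<and> (\<forall>x<K c. wsum (K c) (\<lambda>x a. M (G c x) (G c a)) (Wt c) x < 4 * Wt c x)"
    by metis
  define ll where "ll v = inv_into {0..<K (?rep v)} (G (?rep v)) v" for v
  have bijc: "bij_betw (G (?rep v)) {0..<K (?rep v)} (?C v)" if "v < n" for v
    using D[OF rep_lt[OF cg that]] comp_rep[OF cg that] by simp
  have l_lt: "ll v < K (?rep v)" and Gl: "G (?rep v) (ll v) = v" if v: "v < n" for v
  proof -
    have vin: "v \<in> G (?rep v) ` {0..<K (?rep v)}"
      using bijc[OF v] comp_self[OF cg, of v] by (auto simp: bij_betw_def)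
    show "ll v < K (?rep v)" using inv_into_into[OF vin] by (simp add: ll_def)
    show "G (?rep v) (ll v) = v" using f_inv_into_f[OF vin] by (simp add: ll_def)
  qed
  have Kle: "K (?rep v) \<le> n" if v: "v < n" for v
  proof -
    have "K (?rep v) = card (?C v)" using bij_betw_same_card[OF bijc[OF v]] by simp
    also have "\<dots> \<le> card {..<n}" by (rule card_mono) (auto dest: comp_lt[OF cg v])
    finally show ?thesis by simp
  qed
  have repG: "?rep (G (?rep v) a) = ?rep v" and lG: "ll (G (?rep v) a) = a"
    and GC: "G (?rep v) a \<in> ?C v"
    if v: "v < n" and a: "a < K (?rep v)" for v a
  proof -
    show Gin: "G (?rep v) a \<in> ?C v" using bijc[OF v] a by (auto simp: bij_betw_def)
    show r: "?rep (G (?rep v) a) = ?rep v" using rep_eq[OF cg v Gin] .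
    have "inv_into {0..<K (?rep v)} (G (?rep v)) (G (?rep v) a) = a"
      using bijc[OF v] a by (intro inv_into_f_f) (auto simp: bij_betw_def)
    then show "ll (G (?rep v) a) = a" by (simp add: ll_def r)
  qed
  define rk where "rk v = ?rep v * n + ll v" for v
  define sl where "sl v = 4 * Wt (?rep v) (ll v) - wsum (K (?rep v)) (\<lambda>x a. M (G (?rep v) x) (G (?rep v) a)) (Wt (?rep v)) (ll v)" for v
  have sl_pos: "0 < sl v" if v: "v < n" for v
    using D[OF rep_lt[OF cg v]] l_lt[OF v] by (simp add: sl_def)
  define dl where "dl = Min (insert 1 (sl ` {..<n}))"
  have dl: "0 < dl" unfolding dl_def using sl_pos by (subst Min_gr_iff) auto
  have dlle: "dl \<le> sl v" if "v < n" for v unfolding dl_def using that by (intro Min_le) auto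
  define ep where "ep = min 1 (dl / (2 * (real n + 1)))"
  have ep0: "0 < ep" and ep1: "ep \<le> 1" using dl by (auto simp: ep_def)
  have nep: "real n * ep < dl"
  proof -
    have "real n * ep \<le> real n * (dl / (2 * (real n + 1)))"
      by (rule mult_left_mono) (auto simp: ep_def)
    also have "\<dots> < dl" using dl mult_nonneg_nonneg[of dl "real n"] by (simp add: field_simps, linarith)
    finally show ?thesis .
  qed
  define W where "W v = ep ^ (?rep v) * Wt (?rep v) (ll v)" for v
  have Wpos: "0 < W v" and Wle: "W v \<le> ep ^ (?rep v)" if v: "v < n" for v
    using D[OF rep_lt[OF cg v]] l_lt[OF v] ep0 by (auto simp: W_def intro: mult_left_le)
  define S where "S v = (\<Sum>b\<in>{b. b<n \<and> okp rk M v b}. W b)" for v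
  have key: "S v < 4 * W v" if v: "v < n" for v
  proof -
    let ?c = "?rep v"
    let ?B = "{b. b<n \<and> okp rk M v b}"
    let ?A = "{a. a < K ?c \<and> (ll v \<le> a \<or> M (G ?c (ll v)) (G ?c a) \<noteq> 2)}"
    have finB: "finite ?B" by simp
    have split: "S v = sum W (?B \<inter> ?C v) + sum W (?B - ?C v)"
      unfolding S_def by (rule sum.Int_Diff[OF finB])
    have B1: "?B \<inter> ?C v = G ?c ` ?A"
    proof (intro equalityI subsetI)
      fix b assume b: "b \<in> ?B \<inter> ?C v"
      then have bn: "b < n" and bC: "b \<in> ?C v" and ok: "okp rk M v b" by auto
      have rb: "?rep b = ?c" using rep_eq[OF cg v bC] .
      have la: "ll b < K ?c" using l_lt[OF bn] rb by simp
      have Gb: "G ?c (ll b) = b" using Gl[OF bn] rb by simp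
      have "ll v \<le> ll b \<or> M v b \<noteq> 2" using ok rb by (auto simp: okp_def rk_def)
      then have "ll b \<in> ?A" using la Gb Gl[OF v] by auto
      then show "b \<in> G ?c ` ?A" using Gb by force
    next
      fix b assume "b \<in> G ?c ` ?A"
      then obtain a where a: "a \<in> ?A" and b: "b = G ?c a" by blast
      have ak: "a < K ?c" using a by simp
      have bC: "b \<in> ?C v" using GC[OF v ak] b by simp
      have bn: "b < n" using comp_lt[OF cg v bC] .
      have "rep n M b = ?c" "ll b = a" using repG[OF v ak] lG[OF v ak] b by auto
      then have "okp rk M v b" using a Gl[OF v] b by (auto simp: okp_def rk_def)
      then show "b \<in> ?B \<inter> ?C v" using bn bC by auto
    qed
    have injA: "inj_on (G ?c) ?A"
      using bijc[OF v] by (rule inj_on_subset[OF bij_betw_imp_inj_on]) auto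
    have s1: "sum W (?B \<inter> ?C v) = ep ^ ?c * wsum (K ?c) (\<lambda>x a. M (G ?c x) (G ?c a)) (Wt ?c) (ll v)"
    proof -
      have "sum W (?B \<inter> ?C v) = sum (W \<circ> G ?c) ?A" unfolding B1 by (rule sum.reindex[OF injA])
      also have "\<dots> = (\<Sum>a\<in>?A. ep ^ ?c * Wt ?c a)"
        by (rule sum.cong) (use repG[OF v] lG[OF v] in \<open>auto simp: W_def\<close>)
      also have "\<dots> = ep ^ ?c * wsum (K ?c) (\<lambda>x a. M (G ?c x) (G ?c a)) (Wt ?c) (ll v)"
        by (simp add: wsum_def sum_distrib_left)
      finally show ?thesis .
    qed
    have s2: "sum W (?B - ?C v) \<le> real n * ep ^ Suc ?c"
    proof -
      have "sum W (?B - ?C v) \<le> sum (\<lambda>b. ep ^ Suc ?c) (?B - ?C v)"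
      proof (rule sum_mono)
        fix b assume b: "b \<in> ?B - ?C v"
        then have bn: "b < n" and nC: "b \<notin> ?C v" and ok: "okp rk M v b" by auto
        have "b \<noteq> v" using nC comp_self[OF cg, of v] by auto
        then have "M v b = 2" using comp_adj[OF cg v bn] nC by blast
        then have rkle: "rk v \<le> rk b" using ok by (simp add: okp_def)
        have ne: "?rep b \<noteq> ?c" using rep_neq[OF cg v bn nC] .
        have "?c < ?rep b"
        proof (rule ccontr)
          assume "\<not> ?c < ?rep b"
          then have "Suc (?rep b) \<le> ?c" using ne by simp
          then have "Suc (?rep b) * n \<le> ?c * n" by (rule mult_right_mono) simp
          moreover have "ll b < n" using l_lt[OF bn] Kle[OF bn] by simp
          ultimately have "rk b < rk v" by (simp add: rk_def)
          then show False using rkle by simp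
        qed
        then have "ep ^ ?rep b \<le> ep ^ Suc ?c"
          using ep0 ep1 by (intro power_decreasing) auto
        then show "W b \<le> ep ^ Suc ?c" using Wle[OF bn] by simp
      qed
      also have "\<dots> = real (card (?B - ?C v)) * ep ^ Suc ?c" by simp
      also have "\<dots> \<le> real n * ep ^ Suc ?c"
      proof (rule mult_right_mono)
        have "card (?B - ?C v) \<le> card {..<n}" by (rule card_mono) auto
        then show "real (card (?B - ?C v)) \<le> real n" by simp
      qed (use ep0 in simp)
      finally show ?thesis .
    qed
    have "S v \<le> ep ^ ?c * wsum (K ?c) (\<lambda>x a. M (G ?c x) (G ?c a)) (Wt ?c) (ll v) + real n * ep ^ Suc ?c"
      using split s1 s2 by simp
    also have "\<dots> = ep ^ ?c * (wsum (K ?c) (\<lambda>x a. M (G ?c x) (G ?c a)) (Wt ?c) (ll v) + real n * ep)"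
      by (simp add: algebra_simps)
    also have "\<dots> < ep ^ ?c * (4 * Wt ?c (ll v))"
    proof (rule mult_strict_left_mono)
      have "real n * ep < sl v" using nep dlle[OF v] by simp
      then show "wsum (K ?c) (\<lambda>x a. M (G ?c x) (G ?c a)) (Wt ?c) (ll v) + real n * ep < 4 * Wt ?c (ll v)"
        by (simp add: sl_def)
    qed (use ep0 in simp)
    also have "\<dots> = 4 * W v" by (simp add: W_def)
    finally show ?thesis .
  qed
  define cc where "cc = Max (insert 1 ((\<lambda>v. S v / W v) ` {..<n}))"
  define lo where "lo = Min (insert 1 (W ` {..<n}))"
  have lo: "0 < lo" unfolding lo_def using Wpos by (subst Min_gr_iff) auto
  have cc4: "cc < 4" unfolding cc_def
  proof (subst Max_less_iff, simp, simp, intro ballI)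
    fix x assume "x \<in> insert 1 ((\<lambda>v. S v / W v) ` {..<n})"
    then show "x < 4"
    proof
      assume "x = 1" then show ?thesis by simp
    next
      assume "x \<in> (\<lambda>v. S v / W v) ` {..<n}"
      then obtain v where v: "v < n" and x: "x = S v / W v" by auto
      show ?thesis using key[OF v] Wpos[OF v] by (simp add: x divide_less_eq)
    qed
  qed
  have cc0: "0 < cc" unfolding cc_def by (rule order.strict_trans2[OF zero_less_one]) (intro Max_ge, auto)
  show ?thesis
  proof (rule final_from_weights[of lo n W 1 rk M cc])
    show "0 < lo" by (rule lo)
    fix v assume v: "v < n"
    show "lo \<le> W v \<and> W v \<le> 1"
    proof
      show "lo \<le> W v" unfolding lo_def using v by (intro Min_le) auto
      have "ep ^ ?rep v \<le> 1" using ep0 ep1 by (intro power_le_one) auto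
      then show "W v \<le> 1" using Wle[OF v] by simp
    qed
    have "S v / W v \<le> cc" unfolding cc_def using v by (intro Max_ge) auto
    then show "(\<Sum>b\<in>{b. b<n \<and> okp rk M v b}. W b) \<le> cc * W v"
      using Wpos[OF v] by (simp add: S_def pos_divide_le_eq)
  qed (use cc0 cc4 in auto)
qed


end
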